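(* Let $f,g:[0,1]^d\to\mathbb{R}$ have bounded HK$\mathbf{0}$-variation. Then for all $\mathbf{a},\mathbf{b}\in[0,1]^d$ with $\mathbf{a}\le\mathbf{b}$, $$\operatorname{Var}_{HK\mathbf{0}}(f+g;[\mathbf{0},\mathbf{b}])-\operatorname{Var}_{HK\mathbf{0}}(f+g;[\mathbf{0},\mathbf{a}])\le\operatorname{Var}_{HK\mathbf{0}}(f;[\mathbf{0},\mathbf{b}])+\operatorname{Var}_{HK\mathbf{0}}(g;[\mathbf{0},\mathbf{b}])-\operatorname{Var}_{HK\mathbf{0}}(f;[\mathbf{0},\mathbf{a}])-\operatorname{Var}_{HK\mathbf{0}}(g;[\mathbf{0},\mathbf{a}]).$$
   Context: For a box $[\mathbf{c},\mathbf{e}]$, $\Delta(f;[\mathbf{c},\mathbf{e}])$ is the alternating sum $\sum_{j\in\{0,1\}^s}(-1)^{\sum j_i}f$ over its vertices (sign $+$ at $\mathbf{e}$). The Vitali variation of $f$ on a box is the supremum over grid partitions of the box (generated by one-dimensional partitions of each coordinate interval) of $\sum|\Delta(f;A)|$ over cells $A$. For $\mathbf{a}\in[0,1]^d$, $\mathbf{a}\ne\mathbf{0}$, $\operatorname{Var}_{HK\mathbf{0}}(f;[\mathbf{0},\mathbf{a}])$ is the sum over all nonempty $\{i_1<\dots<i_s\}\subseteq\{1,\dots,d\}$ of the $s$-dimensional Vitali variation of $f$ restricted to the face $\{\mathbf{x}\in[\mathbf{0},\mathbf{a}]:x_j=0\text{ for }j\notin\{i_1,\dots,i_s\}\}$ (degenerate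 faces contributing $0$), and $\operatorname{Var}_{HK\mathbf{0}}(f;[\mathbf{0},\mathbf{0}])=0$. $f$ has bounded HK$\mathbf{0}$-variation if $\operatorname{Var}_{HK\mathbf{0}}(f;[0,1]^d)<\infty$. *)

theory Defs
  imports "HOL-Analysis.Analysis" "HOL-Library.Extended_Real"
begin

text \<open>Points of [0,1]^d are vectors of type real^'n (d = CARD('n)).
  A grid partition of the box [0,a] is given by one finite set of division
  points per coordinate, containing the endpoints 0 and a_i.\<close>

definition grid_partitions :: "real^'n \<Rightarrow> ('n \<Rightarrow> real set) set" where
  "grid_partitions a = {P. \<forall>i. finite (P i) \<and> {0, a$i} \<subseteq> P i \<and> P i \<subseteq> {0..a$i}}"

text \<open>Cells of the grid on the face of [0,a] spanned by the coordinates in S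
  (all other coordinates fixed to 0): lower corner c, upper corner e, with
  c_i < e_i consecutive division points for i in S.\<close>

definition face_cells :: "'n::finite set \<Rightarrow> ('n \<Rightarrow> real set) \<Rightarrow> ((real^'n) \<times> (real^'n)) set" where
  "face_cells S P = {ce. (\<forall>i\<in>S. fst ce$i \<in> P i \<and> snd ce$i \<in> P i \<and> fst ce$i < snd ce$i
        \<and> P i \<inter> {fst ce$i<..<snd ce$i} = {})
        \<and> (\<forall>i. i \<notin> S \<longrightarrow> fst ce$i = 0 \<and> snd ce$i = 0)}"

definition box_delta :: "(real^'n \<Rightarrow> real) \<Rightarrow> 'n set \<Rightarrow> real^'n \<Rightarrow> real^'n \<Rightarrow> real" where
  "box_delta f S c e = (\<Sum>J\<in>Pow S. (-1) ^ card (S - J) * f (\<chi> i. if i \<in> J then e$i else c$i))"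

definition vitali_var_face :: "(real^'n \<Rightarrow> real) \<Rightarrow> 'n set \<Rightarrow> real^'n \<Rightarrow> ereal" where
  "vitali_var_face f S a =
     (SUP P\<in>grid_partitions a. ereal (\<Sum>ce\<in>face_cells S P. \<bar>box_delta f S (fst ce) (snd ce)\<bar>))"

definition var_HK0 :: "(real^'n \<Rightarrow> real) \<Rightarrow> real^'n \<Rightarrow> ereal" where
  "var_HK0 f a = (if a = 0 then 0 else (\<Sum>S\<in>{S. S \<noteq> {}}. vitali_var_face f S a))"

definition bounded_HK0 :: "(real^'n \<Rightarrow> real) \<Rightarrow> bool" where
  "bounded_HK0 f \<longleftrightarrow> var_HK0 f (\<chi> i. 1) < \<infinity>"

end

theory Submission
  imports Defs
begin

definition vupd :: "real^'n \<Rightarrow> 'n \<Rightarrow> real \<Rightarrow> real^'n" where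
  "vupd v k t = (\<chi> i. if i = k then t else v$i)"
definition vert :: "'n set \<Rightarrow> real^'n \<Rightarrow> real^'n \<Rightarrow> real^'n" where
  "vert J c e = (\<chi> i. if i \<in> J then e$i else c$i)"

lemma pow_split:
  assumes "finite S" "k \<in> S"
  shows "(\<Sum>J\<in>Pow S. F J) = (\<Sum>J\<in>Pow (S-{k}). F (insert k J) + F J)"
proof -
  have S: "S = insert k (S - {k})" using assms by auto
  have fin: "finite (Pow (S - {k}))" using assms by simp
  have inj: "inj_on (insert k) (Pow (S - {k}))" by (auto simp: inj_on_def)
  have dis: "Pow (S - {k}) \<inter> insert k ` Pow (S - {k}) = {}" by auto
  have "(\<Sum>J\<in>Pow S. F J) = (\<Sum>J\<in>Pow (S-{k}) \<union> insert k ` Pow (S - {k}). F J)"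
    by (subst S, subst Pow_insert, simp)
  also have "\<dots> = (\<Sum>J\<in>Pow (S-{k}). F J) + (\<Sum>J\<in>insert k ` Pow (S - {k}). F J)"
    by (rule sum.union_disjoint) (use fin dis in auto)
  also have "(\<Sum>J\<in>insert k ` Pow (S - {k}). F J) = (\<Sum>J\<in>Pow (S-{k}). F (insert k J))"
    by (rule sum.reindex[OF inj, unfolded comp_def])
  finally show ?thesis by (simp add: sum.distrib add.commute)
qed

lemma delta_form:
  fixes h :: "real^'n \<Rightarrow> real"
  assumes "k \<in> S"
  shows "box_delta h S c e = (\<Sum>J\<in>Pow (S-{k}). (-1) ^ card ((S-{k}) - J) *
     (h (vert (insert k J) c e) - h (vert J c e)))"
proof -
  have "box_delta h S c e = (\<Sum>J\<in>Pow S. (-1) ^ card (S - J) * h (vert J c e))"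
    by (simp add: box_delta_def vert_def)
  also have "\<dots> = (\<Sum>J\<in>Pow (S-{k}). (-1) ^ card (S - insert k J) * h (vert (insert k J) c e)
      + (-1) ^ card (S - J) * h (vert J c e))"
    by (rule pow_split) (use assms in auto)
  also have "\<dots> = (\<Sum>J\<in>Pow (S-{k}). (-1) ^ card ((S-{k}) - J) *
     (h (vert (insert k J) c e) - h (vert J c e)))"
  proof (rule sum.cong[OF refl])
    fix J assume J: "J \<in> Pow (S - {k})"
    have 1: "S - insert k J = (S-{k}) - J" by auto
    have 2: "S - J = insert k ((S-{k}) - J)" using J assms by auto
    have 3: "card (S - J) = Suc (card ((S-{k}) - J))" unfolding 2 by simp
    show "(-1) ^ card (S - insert k J) * h (vert (insert k J) c e) + (-1) ^ card (S - J) * h (vert J c e)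
      = (-1) ^ card ((S-{k}) - J) * (h (vert (insert k J) c e) - h (vert J c e))"
      unfolding 1 3 by (simp add: algebra_simps)
  qed
  finally show ?thesis .
qed

lemma delta_add:
  fixes h :: "real^'n \<Rightarrow> real"
  assumes "k \<in> S"
  shows "box_delta h S c e = box_delta h S c (vupd e k t) + box_delta h S (vupd c k t) e"
proof -
  have A: "vert (insert k J) c (vupd e k t) = vert J (vupd c k t) e"
    "vert J c (vupd e k t) = vert J c e"
    "vert (insert k J) (vupd c k t) e = vert (insert k J) c e"
    if "J \<in> Pow (S - {k})" for J
    using that by (auto simp: vec_eq_iff vert_def vupd_def)
  show ?thesis
    unfolding delta_form[OF assms, of h] sum.distrib[symmetric]
    by (rule sum.cong[OF refl]) (simp add: A algebra_simps)
qed

lemma delta_lin: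
  "box_delta (\<lambda>x. f x + g x) S c e = box_delta f S c e + box_delta g S c e"
  by (simp add: box_delta_def algebra_simps sum.distrib)

lemma finite_vecs:
  assumes "finite U"
  shows "finite {x::real^'n. \<forall>i. x$i \<in> U}"
proof -
  have "vec_nth ` {x::real^'n. \<forall>i. x$i \<in> U} \<subseteq> (\<Pi>\<^sub>E i\<in>UNIV. U)" by auto
  moreover have "finite (\<Pi>\<^sub>E i\<in>(UNIV::'n set). U)" using assms by (simp add: finite_PiE)
  ultimately have "finite (vec_nth ` {x::real^'n. \<forall>i. x$i \<in> U})" by (rule finite_subset)
  then show ?thesis by (rule finite_imageD) (simp add: inj_on_def vec_eq_iff fun_eq_iff)
qed

lemma finite_face_cells:
  fixes P :: "'n::finite \<Rightarrow> real set"
  assumes "\<forall>i. finite (P i)"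
  shows "finite (face_cells S P)"
proof -
  let ?U = "insert 0 (\<Union>i. P i)"
  have fU: "finite ?U" using assms by simp
  have "face_cells S P \<subseteq> {x::real^'n. \<forall>i. x$i \<in> ?U} \<times> {x::real^'n. \<forall>i. x$i \<in> ?U}"
    unfolding face_cells_def by (auto, metis, metis)
  then show ?thesis by (rule finite_subset) (use finite_vecs[OF fU] in auto)
qed

definition sumc :: "(real^'n \<Rightarrow> real) \<Rightarrow> 'n::finite set \<Rightarrow> ('n \<Rightarrow> real set) \<Rightarrow> real" where
  "sumc h S P = (\<Sum>ce\<in>face_cells S P. \<bar>box_delta h S (fst ce) (snd ce)\<bar>)"

lemma face_cells_cong:
  "(\<And>i. i \<in> S \<Longrightarrow> P i = P' i) \<Longrightarrow> face_cells S P = face_cells S P'"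
  unfolding face_cells_def by auto

lemma ref1:
  fixes P :: "'n::finite \<Rightarrow> real set"
  assumes fin: "\<forall>i. finite (P i)"
  shows "sumc h S P \<le> sumc h S (P(k := insert t (P k)))"
proof (cases "k \<in> S \<and> t \<notin> P k")
  case False
  then have "face_cells S (P(k := insert t (P k))) = face_cells S P"
    by (intro face_cells_cong) (auto simp: insert_absorb)
  then show ?thesis by (simp add: sumc_def)
next
  case True
  then have kS: "k \<in> S" and tP: "t \<notin> P k" by auto
  define P' where "P' = P(k := insert t (P k))"
  define \<phi> where "\<phi> ce = \<bar>box_delta h S (fst ce) (snd ce)\<bar>" for ce
  define F where "F = face_cells S P"
  define F' where "F' = face_cells S P'"
  define A where "A = {ce\<in>F. \<not> (fst ce$k < t \<and> t < snd ce$k)}"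
  define B where "B = {ce\<in>F. fst ce$k < t \<and> t < snd ce$k}"
  define m1 where "m1 ce = (fst ce, vupd (snd ce) k t)" for ce :: "(real^'n) \<times> (real^'n)"
  define m2 where "m2 ce = (vupd (fst ce) k t, snd ce)" for ce :: "(real^'n) \<times> (real^'n)"
  have finF: "finite F" unfolding F_def by (rule finite_face_cells[OF fin])
  have finF': "finite F'" unfolding F'_def by (rule finite_face_cells) (use fin in \<open>simp add: P'_def\<close>)
  have P'k: "P' k = insert t (P k)" and P'i: "\<And>i. i \<noteq> k \<Longrightarrow> P' i = P i" by (auto simp: P'_def)
  have cellF: "fst ce$i \<in> P i \<and> snd ce$i \<in> P i \<and> fst ce$i < snd ce$i \<and> P i \<inter> {fst ce$i<..<snd ce$i} = {}"
    if "ce \<in> F" "i \<in> S" for ce i using that by (auto simp: F_def face_cells_def)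
  have cell0: "fst ce$i = 0 \<and> snd ce$i = 0" if "ce \<in> F" "i \<notin> S" for ce i
    using that by (auto simp: F_def face_cells_def)
  have AF': "A \<subseteq> F'"
  proof
    fix ce assume ce: "ce \<in> A"
    then have ceF: "ce \<in> F" by (simp add: A_def)
    show "ce \<in> F'" unfolding F'_def face_cells_def
    proof (intro CollectI conjI ballI allI impI)
      fix i assume iS: "i \<in> S"
      show "fst ce $ i \<in> P' i" "snd ce $ i \<in> P' i" "fst ce $ i < snd ce $ i"
        using cellF[OF ceF iS] by (auto simp: P'_def)
      show "P' i \<inter> {fst ce $ i<..<snd ce $ i} = {}"
        using cellF[OF ceF iS] ce by (cases "i = k") (auto simp: P'_def A_def)
    next
      fix i assume "i \<notin> S"
      then show "fst ce $ i = 0" "snd ce $ i = 0" using cell0[OF ceF] by auto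
    qed
  qed
  have B1F': "m1 ` B \<subseteq> F'"
  proof
    fix x assume "x \<in> m1 ` B"
    then obtain ce where ce: "ce \<in> B" and x: "x = m1 ce" by auto
    then have ceF: "ce \<in> F" by (simp add: B_def)
    show "x \<in> F'" unfolding F'_def face_cells_def x m1_def
    proof (intro CollectI conjI ballI allI impI)
      fix i assume iS: "i \<in> S"
      show "fst (fst ce, vupd (snd ce) k t) $ i \<in> P' i" "snd (fst ce, vupd (snd ce) k t) $ i \<in> P' i"
        "fst (fst ce, vupd (snd ce) k t) $ i < snd (fst ce, vupd (snd ce) k t) $ i"
        using cellF[OF ceF iS] ce by (auto simp: P'_def vupd_def B_def)
      show "P' i \<inter> {fst (fst ce, vupd (snd ce) k t) $ i<..<snd (fst ce, vupd (snd ce) k t) $ i} = {}"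
        using cellF[OF ceF iS] ce by (cases "i = k") (auto simp: P'_def B_def vupd_def)
    next
      fix i assume "i \<notin> S"
      then show "fst (fst ce, vupd (snd ce) k t) $ i = 0" "snd (fst ce, vupd (snd ce) k t) $ i = 0"
        using cell0[OF ceF] kS by (auto simp: vupd_def)
    qed
  qed
  have B2F': "m2 ` B \<subseteq> F'"
  proof
    fix x assume "x \<in> m2 ` B"
    then obtain ce where ce: "ce \<in> B" and x: "x = m2 ce" by auto
    then have ceF: "ce \<in> F" by (simp add: B_def)
    show "x \<in> F'" unfolding F'_def face_cells_def x m2_def
    proof (intro CollectI conjI ballI allI impI)
      fix i assume iS: "i \<in> S"
      show "fst (vupd (fst ce) k t, snd ce) $ i \<in> P' i" "snd (vupd (fst ce) k t, snd ce) $ i \<in> P' i"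
        "fst (vupd (fst ce) k t, snd ce) $ i < snd (vupd (fst ce) k t, snd ce) $ i"
        using cellF[OF ceF iS] ce by (auto simp: P'_def vupd_def B_def)
      show "P' i \<inter> {fst (vupd (fst ce) k t, snd ce) $ i<..<snd (vupd (fst ce) k t, snd ce) $ i} = {}"
        using cellF[OF ceF iS] ce by (cases "i = k") (auto simp: P'_def B_def vupd_def)
    next
      fix i assume "i \<notin> S"
      then show "fst (vupd (fst ce) k t, snd ce) $ i = 0" "snd (vupd (fst ce) k t, snd ce) $ i = 0"
        using cell0[OF ceF] kS by (auto simp: vupd_def)
    qed
  qed
  have m1k: "snd (m1 ce) $ k = t" and m2k: "fst (m2 ce) $ k = t" for ce
    by (auto simp: m1_def m2_def vupd_def)
  have dAB1: "A \<inter> m1 ` B = {}"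
  proof -
    { fix x y assume x: "x \<in> A" and y: "y \<in> B" and eq: "x = m1 y"
      have "snd x $ k \<in> P k" using x cellF[OF _ kS] by (auto simp: A_def)
      moreover have "snd x $ k = t" using eq m1k[of y] by simp
      ultimately have False using tP by simp }
    then show ?thesis by blast
  qed
  have dAB2: "A \<inter> m2 ` B = {}"
  proof -
    { fix x y assume x: "x \<in> A" and y: "y \<in> B" and eq: "x = m2 y"
      have "fst x $ k \<in> P k" using x cellF[OF _ kS] by (auto simp: A_def)
      moreover have "fst x $ k = t" using eq m2k[of y] by simp
      ultimately have False using tP by simp }
    then show ?thesis by blast
  qed
  have dB12: "m1 ` B \<inter> m2 ` B = {}"
  proof -
    { fix x y assume x: "x \<in> B" and y: "y \<in> B" and eq: "m1 x = m2 y"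
      have "fst x $ k \<in> P k" using x cellF[OF _ kS] by (auto simp: B_def)
      moreover have "fst x $ k = t" using arg_cong[OF eq, of "\<lambda>z. fst z $ k"] m2k[of y] by (simp add: m1_def)
      ultimately have False using tP by simp }
    then show ?thesis by blast
  qed
  have uniq: "snd x $ i = snd y $ i" if "x \<in> F" "y \<in> F" "i \<in> S" "fst x $ i = fst y $ i" for x y i
  proof -
    note cx = cellF[OF that(1,3)] and cy = cellF[OF that(2,3)]
    show ?thesis
    proof (rule ccontr)
      assume "snd x $ i \<noteq> snd y $ i"
      then consider "snd x $ i < snd y $ i" | "snd y $ i < snd x $ i" by linarith
      then show False
      proof cases
        case 1 then have "snd x $ i \<in> P i \<inter> {fst y$i<..<snd y$i}" using cx that(4) by auto
        then show False using cy by auto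
      next
        case 2 then have "snd y $ i \<in> P i \<inter> {fst x$i<..<snd x$i}" using cy that(4) by auto
        then show False using cx by auto
      qed
    qed
  qed
  have uniq2: "fst x $ i = fst y $ i" if "x \<in> F" "y \<in> F" "i \<in> S" "snd x $ i = snd y $ i" for x y i
  proof -
    note cx = cellF[OF that(1,3)] and cy = cellF[OF that(2,3)]
    show ?thesis
    proof (rule ccontr)
      assume "fst x $ i \<noteq> fst y $ i"
      then consider "fst x $ i < fst y $ i" | "fst y $ i < fst x $ i" by linarith
      then show False
      proof cases
        case 1 then have "fst y $ i \<in> P i \<inter> {fst x$i<..<snd x$i}" using cy that(4) by auto
        then show False using cx by auto
      next
        case 2 then have "fst x $ i \<in> P i \<inter> {fst y$i<..<snd y$i}" using cx that(4) by auto
        then show False using cy by auto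
      qed
    qed
  qed
  have inj1: "inj_on m1 B"
  proof (rule inj_onI)
    fix x y assume x: "x \<in> B" and y: "y \<in> B" and eq: "m1 x = m1 y"
    have xF: "x \<in> F" and yF: "y \<in> F" using x y by (auto simp: B_def)
    have f: "fst x = fst y" using eq by (simp add: m1_def)
    have "snd x $ i = snd y $ i" for i
    proof (cases "i = k")
      case True then show ?thesis using uniq[OF xF yF kS] f by simp
    next
      case False then show ?thesis using arg_cong[OF eq, of "\<lambda>z. snd z $ i"] by (simp add: m1_def vupd_def)
    qed
    then show "x = y" using f by (simp add: prod_eq_iff vec_eq_iff)
  qed
  have inj2: "inj_on m2 B"
  proof (rule inj_onI)
    fix x y assume x: "x \<in> B" and y: "y \<in> B" and eq: "m2 x = m2 y"
    have xF: "x \<in> F" and yF: "y \<in> F" using x y by (auto simp: B_def)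
    have f: "snd x = snd y" using eq by (simp add: m2_def)
    have "fst x $ i = fst y $ i" for i
    proof (cases "i = k")
      case True then show ?thesis using uniq2[OF xF yF kS] f by simp
    next
      case False then show ?thesis using arg_cong[OF eq, of "\<lambda>z. fst z $ i"] by (simp add: m2_def vupd_def)
    qed
    then show "x = y" using f by (simp add: prod_eq_iff vec_eq_iff)
  qed
  have FAB: "F = A \<union> B" and dAB: "A \<inter> B = {}" by (auto simp: A_def B_def)
  have finA: "finite A" and finB: "finite B" using finF FAB by auto
  have "sumc h S P = sum \<phi> A + sum \<phi> B"
    unfolding sumc_def F_def[symmetric] \<phi>_def[symmetric] FAB
    by (rule sum.union_disjoint[OF finA finB dAB])
  also have "sum \<phi> B \<le> (\<Sum>ce\<in>B. \<phi> (m1 ce) + \<phi> (m2 ce))"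
  proof (rule sum_mono)
    fix ce assume "ce \<in> B"
    show "\<phi> ce \<le> \<phi> (m1 ce) + \<phi> (m2 ce)"
      unfolding \<phi>_def m1_def m2_def using delta_add[OF kS, of h "fst ce" "snd ce" t] by simp
  qed
  also have "(\<Sum>ce\<in>B. \<phi> (m1 ce) + \<phi> (m2 ce)) = sum \<phi> (m1 ` B) + sum \<phi> (m2 ` B)"
    by (simp add: sum.distrib sum.reindex[OF inj1] sum.reindex[OF inj2])
  also have "sum \<phi> A + (sum \<phi> (m1 ` B) + sum \<phi> (m2 ` B)) = sum \<phi> (A \<union> m1 ` B \<union> m2 ` B)"
    using finA finB dAB1 dAB2 dB12
    by (simp add: sum.union_disjoint Int_Un_distrib2 add.assoc)
  also have "\<dots> \<le> sum \<phi> F'"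
    by (rule sum_mono2[OF finF']) (use AF' B1F' B2F' in \<open>auto simp: \<phi>_def\<close>)
  finally show ?thesis by (simp add: sumc_def F'_def P'_def \<phi>_def)
qed


lemma refine:
  fixes P P' :: "'n::finite \<Rightarrow> real set"
  assumes "\<forall>i. finite (P' i)" "\<forall>i. P i \<subseteq> P' i"
  shows "sumc h S P \<le> sumc h S P'"
proof -
  have "\<And>P. (\<Sum>i\<in>UNIV. card (P' i - P i)) = n \<Longrightarrow> \<forall>i. P i \<subseteq> P' i \<Longrightarrow> sumc h S P \<le> sumc h S P'" for n
  proof (induction n rule: less_induct)
    case (less n P)
    show ?case
    proof (cases "\<forall>i. P' i - P i = {}")
      case True
      then have "P = P'" using less.prems(2) by (auto simp: fun_eq_iff)
      then show ?thesis by simp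
    next
      case False
      then obtain k t where t: "t \<in> P' k" "t \<notin> P k" by auto
      define P1 where "P1 = P(k := insert t (P k))"
      have finP: "\<forall>i. finite (P i)" using assms(1) less.prems(2) finite_subset by blast
      have sub1: "\<forall>i. P1 i \<subseteq> P' i" using less.prems(2) t by (auto simp: P1_def)
      have lt: "(\<Sum>i\<in>UNIV. card (P' i - P1 i)) < n"
        unfolding less.prems(1)[symmetric]
      proof (rule sum_strict_mono_ex1)
        show "finite (UNIV::'n set)" by simp
        show "\<forall>x\<in>UNIV. card (P' x - P1 x) \<le> card (P' x - P x)"
          using assms(1) by (auto simp: P1_def intro!: card_mono)
        have "P' k - P1 k \<subset> P' k - P k" using t by (auto simp: P1_def)
        then have "card (P' k - P1 k) < card (P' k - P k)"
          using assms(1) by (intro psubset_card_mono) auto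
        then show "\<exists>a\<in>UNIV. card (P' a - P1 a) < card (P' a - P a)" by blast
      qed
      have "sumc h S P \<le> sumc h S P1" unfolding P1_def by (rule ref1[OF finP])
      also have "\<dots> \<le> sumc h S P'" using less.IH[OF lt refl sub1] .
      finally show ?thesis .
    qed
  qed
  then show ?thesis using assms(2) by blast
qed

lemma sumc_nonneg: "0 \<le> sumc h S P"
  unfolding sumc_def by (rule sum_nonneg) simp

lemma sumc_lin:
  "sumc (\<lambda>x. f x + g x) S P \<le> sumc f S P + sumc g S P"
  unfolding sumc_def delta_lin sum.distrib[symmetric] by (rule sum_mono) (rule abs_triangle_ineq)

lemma split_grid:
  fixes R :: "'n::finite \<Rightarrow> real set" and a b :: "real^'n"
  assumes R: "R \<in> grid_partitions b" and aR: "\<forall>i. a$i \<in> R i" and a0: "\<forall>i. 0 \<le> a$i"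
  defines "Ra \<equiv> (\<lambda>i. R i \<inter> {0..a$i})"
  shows "Ra \<in> grid_partitions a"
    and "sumc h S R = sumc h S Ra + (\<Sum>ce\<in>face_cells S R - face_cells S Ra. \<bar>box_delta h S (fst ce) (snd ce)\<bar>)"
proof -
  show Ra: "Ra \<in> grid_partitions a"
    using R aR a0 by (auto simp: grid_partitions_def Ra_def)
  have sub: "face_cells S Ra \<subseteq> face_cells S R"
  proof
    fix ce assume ce: "ce \<in> face_cells S Ra"
    show "ce \<in> face_cells S R" unfolding face_cells_def
    proof (intro CollectI conjI ballI allI impI)
      fix i assume iS: "i \<in> S"
      note c = ce[unfolded face_cells_def, simplified, THEN conjunct1, rule_format, OF iS]
      show "fst ce $ i \<in> R i" "snd ce $ i \<in> R i" "fst ce $ i < snd ce $ i"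
        using c by (auto simp: Ra_def)
      show "R i \<inter> {fst ce $ i<..<snd ce $ i} = {}"
        using c by (auto simp: Ra_def)
    next
      fix i assume "i \<notin> S"
      then show "fst ce $ i = 0" "snd ce $ i = 0" using ce by (auto simp: face_cells_def)
    qed
  qed
  have fin: "finite (face_cells S R)" by (rule finite_face_cells) (use R in \<open>auto simp: grid_partitions_def\<close>)
  show "sumc h S R = sumc h S Ra + (\<Sum>ce\<in>face_cells S R - face_cells S Ra. \<bar>box_delta h S (fst ce) (snd ce)\<bar>)"
    unfolding sumc_def by (subst sum.subset_diff[OF sub fin]) simp
qed


lemma vvf_eq: "vitali_var_face h S x = (SUP P\<in>grid_partitions x. ereal (sumc h S P))"
  by (simp add: vitali_var_face_def sumc_def)

lemma grid_I:
  "(\<And>i. finite (R i)) \<Longrightarrow> (\<And>i. 0 \<in> R i) \<Longrightarrow> (\<And>i. b$i \<in> R i) \<Longrightarrow> (\<And>i. R i \<subseteq> {0..b$i})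
   \<Longrightarrow> R \<in> grid_partitions b"
  by (simp add: grid_partitions_def)

lemma grid_D:
  assumes "R \<in> grid_partitions b"
  shows "finite (R i)" "0 \<in> R i" "b$i \<in> R i" "R i \<subseteq> {0..b$i}"
  using assms by (auto simp: grid_partitions_def)

lemma grid_ne: "\<forall>i. 0 \<le> x$i \<Longrightarrow> (\<lambda>i. {0, x$i}) \<in> grid_partitions x"
  by (auto simp: grid_partitions_def)

lemma vvf_upper: "P \<in> grid_partitions x \<Longrightarrow> ereal (sumc h S P) \<le> vitali_var_face h S x"
  unfolding vvf_eq by (rule SUP_upper)

lemma vvf_nonneg: "\<forall>i. 0 \<le> x$i \<Longrightarrow> 0 \<le> vitali_var_face h S x"
  using vvf_upper[OF grid_ne, of x h S] sumc_nonneg[of h S] by (meson ereal_less_eq(5) order_trans)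

lemma sup_add_le:
  fixes C c :: ereal
  assumes "A \<noteq> {}" "c \<noteq> -\<infinity>" "\<And>x. x \<in> A \<Longrightarrow> f x + c \<le> C"
  shows "(SUP x\<in>A. f x) + c \<le> C"
  using assms by (simp add: SUP_ereal_add_left[symmetric] SUP_least)

lemma vvf_bound:
  assumes "\<forall>i. 0 \<le> x$i" "\<And>P. P \<in> grid_partitions x \<Longrightarrow> ereal (sumc h S P) \<le> C"
  shows "vitali_var_face h S x \<le> C"
  unfolding vvf_eq using assms by (simp add: SUP_least)

lemma mono_V:
  assumes a0: "\<forall>i. 0 \<le> a$i" and ab: "\<forall>i. a$i \<le> b$i"
  shows "vitali_var_face h S a \<le> vitali_var_face h S b"
proof (rule vvf_bound[OF a0])
  fix Q assume Q: "Q \<in> grid_partitions a"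
  define R where "R = (\<lambda>i. insert (b$i) (Q i))"
  have R: "R \<in> grid_partitions b"
  proof (rule grid_I)
    fix i
    show "finite (R i)" "0 \<in> R i" "b$i \<in> R i" using grid_D[OF Q, of i] by (auto simp: R_def)
    have "{0..a$i} \<subseteq> {0..b$i}" using ab by auto
    then have "Q i \<subseteq> {0..b$i}" using grid_D(4)[OF Q, of i] by blast
    moreover have "b$i \<in> {0..b$i}" using a0 ab by (auto dest!: spec[of _ i])
    ultimately show "R i \<subseteq> {0..b$i}" by (simp add: R_def)
  qed
  have aR: "\<forall>i. a$i \<in> R i" using Q by (auto simp: grid_partitions_def R_def)
  note sp = split_grid[OF R aR a0]
  define Ra where "Ra = (\<lambda>i. R i \<inter> {0..a$i})"
  have "sumc h S Q \<le> sumc h S Ra"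
    by (rule refine) (use Q in \<open>auto simp: grid_partitions_def Ra_def R_def\<close>)
  also have "\<dots> \<le> sumc h S R" unfolding sp(2) Ra_def by (simp add: sum_nonneg)
  finally show "ereal (sumc h S Q) \<le> vitali_var_face h S b"
    using vvf_upper[OF R, of h S] by (meson ereal_less_eq(3) order_trans)
qed

lemma subadd_V:
  assumes "\<forall>i. 0 \<le> x$i"
  shows "vitali_var_face (\<lambda>y. f y + g y) S x \<le> vitali_var_face f S x + vitali_var_face g S x"
proof (rule vvf_bound[OF assms])
  fix P assume P: "P \<in> grid_partitions x"
  have "ereal (sumc (\<lambda>y. f y + g y) S P) \<le> ereal (sumc f S P) + ereal (sumc g S P)"
    using sumc_lin[of f g S P] by simp
  also have "\<dots> \<le> vitali_var_face f S x + vitali_var_face g S x"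
    by (intro add_mono vvf_upper P)
  finally show "ereal (sumc (\<lambda>y. f y + g y) S P) \<le> vitali_var_face f S x + vitali_var_face g S x" .
qed

lemma per_S:
  assumes a0: "\<forall>i. 0 \<le> a$i" and ab: "\<forall>i. a$i \<le> b$i"
  shows "vitali_var_face (\<lambda>x. f x + g x) S b + vitali_var_face f S a + vitali_var_face g S a
    \<le> vitali_var_face (\<lambda>x. f x + g x) S a + vitali_var_face f S b + vitali_var_face g S b"
    (is "?Vh b + ?Vf a + ?Vg a \<le> ?C")
proof -
  have b0: "\<forall>i. 0 \<le> b$i" using a0 ab by (meson order_trans)
  have key: "ereal (sumc (\<lambda>x. f x + g x) S P) + ereal (sumc f S Q) + ereal (sumc g S Q') \<le> ?C"
    if P: "P \<in> grid_partitions b" and Q: "Q \<in> grid_partitions a" and Q': "Q' \<in> grid_partitions a"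
    for P Q Q'
  proof -
    define R where "R = (\<lambda>i. insert (a$i) (P i \<union> Q i \<union> Q' i))"
    have R: "R \<in> grid_partitions b"
    proof (rule grid_I)
      fix i
      show "finite (R i)" "0 \<in> R i" "b$i \<in> R i" using grid_D[OF P, of i] grid_D[OF Q, of i] grid_D[OF Q', of i]
        by (auto simp: R_def)
      have "{0..a$i} \<subseteq> {0..b$i}" using ab by auto
      then have "Q i \<subseteq> {0..b$i}" "Q' i \<subseteq> {0..b$i}" using grid_D(4)[OF Q, of i] grid_D(4)[OF Q', of i]
        by blast+
      moreover have "a$i \<in> {0..b$i}" using a0 ab by (auto dest!: spec[of _ i])
      ultimately show "R i \<subseteq> {0..b$i}" using grid_D(4)[OF P, of i] by (simp add: R_def)
    qed
    have aR: "\<forall>i. a$i \<in> R i" by (auto simp: R_def)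
    define Ra where "Ra = (\<lambda>i. R i \<inter> {0..a$i})"
    define D where "D = face_cells S R - face_cells S Ra"
    have sp1: "Ra \<in> grid_partitions a" unfolding Ra_def by (rule split_grid(1)[OF R aR a0])
    have sp2: "sumc h S R = sumc h S Ra + (\<Sum>ce\<in>D. \<bar>box_delta h S (fst ce) (snd ce)\<bar>)" for h
      unfolding D_def Ra_def by (rule split_grid(2)[OF R aR a0])
    have finR: "\<forall>i. finite (R i)" using R by (simp add: grid_partitions_def)
    have finRa: "\<forall>i. finite (Ra i)" using sp1 by (simp add: grid_partitions_def)
    let ?s = "\<lambda>h. (\<Sum>ce\<in>D. \<bar>box_delta h S (fst ce) (snd ce)\<bar>)"
    have 1: "sumc (\<lambda>x. f x + g x) S P \<le> sumc (\<lambda>x. f x + g x) S Ra + ?s f + ?s g"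
    proof -
      have "sumc (\<lambda>x. f x + g x) S P \<le> sumc (\<lambda>x. f x + g x) S R"
        by (rule refine[OF finR]) (auto simp: R_def)
      also have "\<dots> = sumc (\<lambda>x. f x + g x) S Ra + ?s (\<lambda>x. f x + g x)" by (rule sp2)
      also have "?s (\<lambda>x. f x + g x) \<le> ?s f + ?s g"
        unfolding delta_lin sum.distrib[symmetric] by (rule sum_mono) (rule abs_triangle_ineq)
      finally show ?thesis by simp
    qed
    have 2: "sumc f S Q \<le> sumc f S Ra"
      by (rule refine[OF finRa]) (use Q in \<open>auto simp: grid_partitions_def Ra_def R_def\<close>)
    have 3: "sumc g S Q' \<le> sumc g S Ra"
      by (rule refine[OF finRa]) (use Q' in \<open>auto simp: grid_partitions_def Ra_def R_def\<close>)
    have real: "sumc (\<lambda>x. f x + g x) S P + sumc f S Q + sumc g S Q'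
      \<le> sumc (\<lambda>x. f x + g x) S Ra + sumc f S R + sumc g S R"
      using 1 2 3 sp2[of f] sp2[of g] by linarith
    have "ereal (sumc (\<lambda>x. f x + g x) S P) + ereal (sumc f S Q) + ereal (sumc g S Q')
       \<le> ereal (sumc (\<lambda>x. f x + g x) S Ra) + ereal (sumc f S R) + ereal (sumc g S R)"
      using real by simp
    also have "\<dots> \<le> ?C"
      by (intro add_mono vvf_upper sp1 R)
    finally show ?thesis .
  qed
  have ne: "grid_partitions a \<noteq> {}" "grid_partitions b \<noteq> {}" using grid_ne a0 b0 by blast+
  have nn: "?Vf a \<noteq> -\<infinity>" "?Vg a \<noteq> -\<infinity>"
    using vvf_nonneg[OF a0, of f S] vvf_nonneg[OF a0, of g S] by auto
  have "?Vh b + (?Vf a + ?Vg a) \<le> ?C"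
    unfolding vvf_eq[of "\<lambda>x. f x + g x" S b]
  proof (rule sup_add_le[OF ne(2)])
    show "?Vf a + ?Vg a \<noteq> -\<infinity>" using nn by simp
    fix P assume P: "P \<in> grid_partitions b"
    have "?Vf a + (ereal (sumc (\<lambda>x. f x + g x) S P) + ?Vg a) \<le> ?C"
      unfolding vvf_eq[of f S a]
    proof (rule sup_add_le[OF ne(1)])
      show "ereal (sumc (\<lambda>x. f x + g x) S P) + ?Vg a \<noteq> -\<infinity>" using nn by simp
      fix Q assume Q: "Q \<in> grid_partitions a"
      have "?Vg a + (ereal (sumc (\<lambda>x. f x + g x) S P) + ereal (sumc f S Q)) \<le> ?C"
        unfolding vvf_eq[of g S a]
      proof (rule sup_add_le[OF ne(1)])
        show "ereal (sumc (\<lambda>x. f x + g x) S P) + ereal (sumc f S Q) \<noteq> -\<infinity>" by simp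
        fix Q' assume Q': "Q' \<in> grid_partitions a"
        show "ereal (sumc g S Q') + (ereal (sumc (\<lambda>x. f x + g x) S P) + ereal (sumc f S Q)) \<le> ?C"
          using key[OF P Q Q'] by (simp add: ac_simps)
      qed
      then show "ereal (sumc f S Q) + (ereal (sumc (\<lambda>x. f x + g x) S P) + ?Vg a) \<le> ?C"
        by (simp add: ac_simps)
    qed
    then show "ereal (sumc (\<lambda>x. f x + g x) S P) + (?Vf a + ?Vg a) \<le> ?C"
      by (simp add: ac_simps)
  qed
  then show ?thesis by (simp add: add.assoc)
qed


lemma V_zero:
  assumes "S \<noteq> {}"
  shows "vitali_var_face h S (0::real^'n::finite) = 0"
proof -
  obtain k where k: "k \<in> S" using assms by auto
  have "sumc h S P = 0" if P: "P \<in> grid_partitions (0::real^'n)" for P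
  proof -
    have "face_cells S P = {}"
    proof (rule ccontr)
      assume "face_cells S P \<noteq> {}"
      then obtain ce where ce: "ce \<in> face_cells S P" by blast
      then have "fst ce $ k \<in> P k" "snd ce $ k \<in> P k" "fst ce $ k < snd ce $ k"
        using k by (auto simp: face_cells_def)
      moreover have Pk: "P k \<subseteq> {0}" using grid_D(4)[OF P, of k] by simp
      ultimately have "fst ce $ k = 0" "snd ce $ k = 0" "fst ce $ k < snd ce $ k" by blast+
      then show False by simp
    qed
    then show ?thesis by (simp add: sumc_def)
  qed
  then have "vitali_var_face h S 0 = (SUP P\<in>grid_partitions (0::real^'n). (0::ereal))"
    unfolding vvf_eq by (intro SUP_cong) auto
  also have "\<dots> = 0"
  proof (rule SUP_const)
    have "\<forall>i. 0 \<le> (0::real^'n)$i" by simp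
    then show "grid_partitions (0::real^'n) \<noteq> {}" using grid_ne by blast
  qed
  finally show ?thesis .
qed

lemma var_sum:
  fixes x :: "real^'n::finite"
  shows "var_HK0 h x = (\<Sum>S\<in>{S. S \<noteq> {}}. vitali_var_face h S x)"
  by (simp add: var_HK0_def V_zero)

lemma var_mono:
  fixes a b :: "real^'n::finite"
  assumes "\<forall>i. 0 \<le> a$i" "\<forall>i. a$i \<le> b$i"
  shows "var_HK0 h a \<le> var_HK0 h b"
  unfolding var_sum by (rule sum_mono) (rule mono_V[OF assms])

lemma var_nonneg:
  fixes x :: "real^'n::finite"
  assumes "\<forall>i. 0 \<le> x$i"
  shows "0 \<le> var_HK0 h x"
  unfolding var_sum by (rule sum_nonneg) (rule vvf_nonneg[OF assms])

theorem lemma1: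
  fixes f g :: "real^'n \<Rightarrow> real" and a b :: "real^'n"
  assumes "bounded_HK0 f" and "bounded_HK0 g"
    and "\<forall>i. 0 \<le> a$i \<and> a$i \<le> 1" and "\<forall>i. 0 \<le> b$i \<and> b$i \<le> 1"
    and "\<forall>i. a$i \<le> b$i"
  shows "var_HK0 (\<lambda>x. f x + g x) b - var_HK0 (\<lambda>x. f x + g x) a
         \<le> var_HK0 f b + var_HK0 g b - var_HK0 f a - var_HK0 g a"
proof -
  have a0: "\<forall>i. 0 \<le> a$i" and b0: "\<forall>i. 0 \<le> b$i" and ab: "\<forall>i. a$i \<le> b$i"
    and a1: "\<forall>i. a$i \<le> ((\<chi> i. 1)::real^'n)$i" and b1: "\<forall>i. b$i \<le> ((\<chi> i. 1)::real^'n)$i"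
    using assms(3-5) by auto
  have fin1: "var_HK0 f (\<chi> i. 1) < \<infinity>" "var_HK0 g (\<chi> i. 1) < \<infinity>"
    using assms(1,2) by (auto simp: bounded_HK0_def)
  have Fa: "var_HK0 f a < \<infinity>" using var_mono[OF a0 a1, of f] fin1 by (meson order_le_less_trans)
  have Ga: "var_HK0 g a < \<infinity>" using var_mono[OF a0 a1, of g] fin1 by (meson order_le_less_trans)
  have Fb: "var_HK0 f b < \<infinity>" using var_mono[OF b0 b1, of f] fin1 by (meson order_le_less_trans)
  have Gb: "var_HK0 g b < \<infinity>" using var_mono[OF b0 b1, of g] fin1 by (meson order_le_less_trans)
  have nn: "0 \<le> var_HK0 (\<lambda>x. f x + g x) b" "0 \<le> var_HK0 (\<lambda>x. f x + g x) a"
    "0 \<le> var_HK0 f a" "0 \<le> var_HK0 g a" "0 \<le> var_HK0 f b" "0 \<le> var_HK0 g b"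
    using var_nonneg[OF a0] var_nonneg[OF b0] by auto
  obtain fa where fa: "var_HK0 f a = ereal fa" using Fa nn(3) by (cases "var_HK0 f a") auto
  obtain ga where ga: "var_HK0 g a = ereal ga" using Ga nn(4) by (cases "var_HK0 g a") auto
  obtain fb where fb: "var_HK0 f b = ereal fb" using Fb nn(5) by (cases "var_HK0 f b") auto
  obtain gb where gb: "var_HK0 g b = ereal gb" using Gb nn(6) by (cases "var_HK0 g b") auto
  have "var_HK0 (\<lambda>x. f x + g x) a \<le> var_HK0 f a + var_HK0 g a"
    unfolding var_sum sum.distrib[symmetric] by (rule sum_mono) (rule subadd_V[OF a0])
  then have Ha: "var_HK0 (\<lambda>x. f x + g x) a \<le> ereal (fa + ga)" by (simp add: fa ga)
  obtain ha where ha: "var_HK0 (\<lambda>x. f x + g x) a = ereal ha" using Ha nn(2)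
    by (cases "var_HK0 (\<lambda>x. f x + g x) a") auto
  have main: "var_HK0 (\<lambda>x. f x + g x) b + var_HK0 f a + var_HK0 g a
      \<le> var_HK0 (\<lambda>x. f x + g x) a + var_HK0 f b + var_HK0 g b"
    unfolding var_sum sum.distrib[symmetric] by (rule sum_mono) (rule per_S[OF a0 ab])
  then have main': "var_HK0 (\<lambda>x. f x + g x) b + ereal (fa + ga) \<le> ereal (ha + fb + gb)"
    by (simp add: fa ga fb gb ha add.assoc)
  show ?thesis
  proof (cases "var_HK0 (\<lambda>x. f x + g x) b")
    case (real hb)
    then have "hb + (fa + ga) \<le> ha + fb + gb" using main' by simp
    then show ?thesis by (simp add: real fa ga fb gb ha)
  next
    case PInf
    then show ?thesis using main' by simp
  next
    case MInf
    then show ?thesis using nn(1) by simp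
  qed
qed

end
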